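(* Let $a,b\ge1$ and $P=[a]\times[b]$. Then $\sum_{p\in P}T_p^-\equiv^q \frac{[a]_q[b]_q}{[a+b]_q}$.
   Context: $[a]\times[b]=\{(i,j)\colon1\le i\le a,1\le j\le b\}$ with $(i,j)\le(i',j')$ iff $i\le i'$ and $j\le j'$. $\mathcal{J}(P)$ is the set of order ideals. For $p\in P$, $I\in\mathcal{J}(P)$: $T_p^+(I)=1$ if $p$ is minimal in $P\setminus I$, else $0$; $T_p^-(I)=1$ if $p$ is maximal in $I$, else $0$; $T_p^q=T_p^+-qT_p^-$ with $q$ an indeterminate. For $f,g\colon\mathcal{J}(P)\to\mathbb{R}(q)$, $f\equiv^q g$ means $f-g=\sum_{p\in P}c_p(q)T_p^q$ for some $c_p(q)\in\mathbb{R}(q)$; an element of $\mathbb{R}(q)$ denotes a constant function. $[m]_q=1+q+\dots+q^{m-1}$. *)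

theory Defs
  imports "HOL-Computational_Algebra.Polynomial" "HOL-Computational_Algebra.Fraction_Field"
begin

type_synonym ratfun = "real poly fract"

definition qvar :: ratfun where
  "qvar = Fract [:0, 1:] 1"

definition qint :: "nat \<Rightarrow> ratfun" where
  "qint m = (\<Sum>i<m. qvar ^ i)"

definition grid :: "nat \<Rightarrow> nat \<Rightarrow> (nat \<times> nat) set" where
  "grid a b = {(i, j). 1 \<le> i \<and> i \<le> a \<and> 1 \<le> j \<and> j \<le> b}"

definition grid_le :: "nat \<times> nat \<Rightarrow> nat \<times> nat \<Rightarrow> bool" where
  "grid_le x y \<longleftrightarrow> fst x \<le> fst y \<and> snd x \<le> snd y"

definition order_ideals :: "'a set \<Rightarrow> ('a \<Rightarrow> 'a \<Rightarrow> bool) \<Rightarrow> 'a set set" where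
  "order_ideals P le = {I. I \<subseteq> P \<and> (\<forall>x\<in>I. \<forall>y\<in>P. le y x \<longrightarrow> y \<in> I)}"

definition toggle_plus :: "'a set \<Rightarrow> ('a \<Rightarrow> 'a \<Rightarrow> bool) \<Rightarrow> 'a \<Rightarrow> 'a set \<Rightarrow> ratfun" where
  "toggle_plus P le p I =
     (if p \<in> P - I \<and> (\<forall>y\<in>P - I. le y p \<longrightarrow> y = p) then 1 else 0)"

definition toggle_minus :: "'a set \<Rightarrow> ('a \<Rightarrow> 'a \<Rightarrow> bool) \<Rightarrow> 'a \<Rightarrow> 'a set \<Rightarrow> ratfun" where
  "toggle_minus P le p I =
     (if p \<in> I \<and> (\<forall>y\<in>I. le p y \<longrightarrow> y = p) then 1 else 0)"

definition toggle_q :: "'a set \<Rightarrow> ('a \<Rightarrow> 'a \<Rightarrow> bool) \<Rightarrow> 'a \<Rightarrow> 'a set \<Rightarrow> ratfun" where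
  "toggle_q P le p I = toggle_plus P le p I - qvar * toggle_minus P le p I"

definition qequiv :: "'a set \<Rightarrow> ('a \<Rightarrow> 'a \<Rightarrow> bool) \<Rightarrow> ('a set \<Rightarrow> ratfun) \<Rightarrow> ('a set \<Rightarrow> ratfun) \<Rightarrow> bool" where
  "qequiv P le f g \<longleftrightarrow>
     (\<exists>c :: 'a \<Rightarrow> ratfun. \<forall>I\<in>order_ideals P le.
        f I - g I = (\<Sum>p\<in>P. c p * toggle_q P le p I))"

end

theory Submission
  imports Defs
begin

lemma qvar_pos: "qvar > 0"
  unfolding qvar_def by (subst zero_less_Fract_iff) (auto simp: less_poly_def pos_poly_pCons one_pCons)

lemma qint_pos: "n \<ge> 1 \<Longrightarrow> qint n > 0"
proof -
  assume "n \<ge> 1"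
  then obtain m where n: "n = Suc m" by (cases n) auto
  have "qint n = (\<Sum>i<m. qvar ^ i) + qvar ^ m" unfolding qint_def n by simp
  moreover have "(\<Sum>i<m. qvar ^ i) \<ge> 0" by (intro sum_nonneg) (use qvar_pos in auto)
  moreover have "qvar ^ m > 0" using qvar_pos by simp
  ultimately show ?thesis by linarith
qed

lemma qint_0: "qint 0 = 0" by (simp add: qint_def)

lemma qint_Suc: "qint (Suc n) = 1 + qvar * qint n"
  unfolding qint_def sum.lessThan_Suc_shift by (simp add: sum_distrib_left)

lemma qint_add: "qint (m + n) = qint m + qvar ^ m * qint n"
  by (induction m) (auto simp: qint_0 qint_Suc algebra_simps)

lemma qint_mul: "qvar * qint n = qint n + qvar ^ n - 1"
  by (induction n) (auto simp: qint_0 qint_Suc algebra_simps)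


lemma pointwise:
  fixes lam :: "nat \<Rightarrow> nat" and a b k :: nat
  assumes mono: "lam (Suc k) \<le> lam k" "lam (Suc (Suc k)) \<le> lam (Suc k)"
  defines "A \<equiv> qint a" and "B \<equiv> qint b"
  defines "E \<equiv> \<lambda>i j. qint (i-1) * B + qint (j-1) * A - A*B"
  defines "d \<equiv> \<lambda>k. (if lam (Suc k) < lam k then 1 else 0 :: ratfun)"
  defines "\<Phi> \<equiv> \<lambda>k. d k * (qint k * B + qint (lam k) * A - A*B) - A * qint (lam k)"
  shows "(if lam (Suc k) < lam k then E (Suc k) (Suc (lam (Suc k))) else 0)
         - qvar * (if lam (Suc (Suc k)) < lam (Suc k) then E (Suc k) (lam (Suc k)) else 0)
       = qint (a+b) * d (Suc k) + \<Phi> k - \<Phi> (Suc k)"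
proof -
  obtain Q where Q: "qvar^a = Q" by simp
  have D: "qint (a+b) = A + Q * B" unfolding A_def B_def Q[symmetric] by (rule qint_add)
  have qA: "qvar * A = A + Q - 1" unfolding A_def Q[symmetric] by (rule qint_mul)
  have sk: "qint (Suc k) = 1 + qvar * qint k" by (rule qint_Suc)
  show ?thesis
  proof (cases "lam (Suc (Suc k)) < lam (Suc k)")
    case True
    then obtain m where m: "lam (Suc k) = Suc m" by (cases "lam (Suc k)") auto
    have sm: "qint (Suc m) = 1 + qvar * qint m" by (rule qint_Suc)
    show ?thesis
    proof (cases "lam (Suc k) < lam k")
      case True
      have key: "(1 + qvar * qint m) * A + (- (A * B) - qvar * (qint k * B + qint m * A - A * B)) -
        (A + (Q * B - (1 + qvar * qint k) * B)) = B * (qvar * A - (A + Q - 1))"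
        by (simp add: algebra_simps)
      with \<open>lam (Suc (Suc k)) < lam (Suc k)\<close> True show ?thesis
        unfolding \<Phi>_def d_def E_def using D qA sk sm m by simp
    next
      case False
      then have "lam k = lam (Suc k)" using mono by simp
      have key: "- (qvar * (qint k * B + qint m * A - A * B)) -
        (A + Q * B - A * (1 + qvar * qint m) - ((1 + qvar * qint k) * B - A * B))
         = B * (qvar * A - (A + Q - 1))"
        by (simp add: algebra_simps)
      with \<open>lam (Suc (Suc k)) < lam (Suc k)\<close> False \<open>lam k = lam (Suc k)\<close> show ?thesis
        unfolding \<Phi>_def d_def E_def using D qA sk sm m by simp
    qed
  next
    case False
    show ?thesis
    proof (cases "lam (Suc k) < lam k")
      case True
      with False show ?thesis
        unfolding \<Phi>_def d_def E_def using D qA sk by simp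
    next
      case F2: False
      then have "lam k = lam (Suc k)" using mono by simp
      with False F2 show ?thesis
        unfolding \<Phi>_def d_def E_def using D qA sk by simp
    qed
  qed
qed


lemma lam_identity:
  fixes lam :: "nat \<Rightarrow> nat" and a b :: nat
  assumes mono: "\<And>i. lam (Suc i) \<le> lam i" and l0: "lam 0 = b" and la: "lam (Suc a) = 0"
  shows "(\<Sum>i\<in>{1..a}. (if lam i < lam (i-1) then qint (i-1) * qint b + qint (Suc (lam i) - 1) * qint a - qint a * qint b else 0)
           - qvar * (if lam (Suc i) < lam i then qint (i-1) * qint b + qint (lam i - 1) * qint a - qint a * qint b else 0))
       = qint (a+b) * (\<Sum>i\<in>{1..a}. if lam (Suc i) < lam i then 1 else 0) - qint a * qint b"
proof -
  define d where "d = (\<lambda>k. (if lam (Suc k) < lam k then 1 else 0 :: ratfun))"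
  define \<Phi> where "\<Phi> = (\<lambda>k. d k * (qint k * qint b + qint (lam k) * qint a - qint a * qint b) - qint a * qint (lam k))"
  define X where "X = (\<lambda>i. (if lam i < lam (i-1) then qint (i-1) * qint b + qint (Suc (lam i) - 1) * qint a - qint a * qint b else 0)
           - qvar * (if lam (Suc i) < lam i then qint (i-1) * qint b + qint (lam i - 1) * qint a - qint a * qint b else 0))"
  have pw: "X (Suc k) = qint (a+b) * d (Suc k) + \<Phi> k - \<Phi> (Suc k)" for k
    using pointwise[where lam=lam and a=a and b=b and k=k, OF mono mono] unfolding X_def d_def \<Phi>_def by simp
  have tele: "(\<Sum>i\<in>{1..n}. X i) = qint (a+b) * (\<Sum>i\<in>{1..n}. d i) + \<Phi> 0 - \<Phi> n" for n
  proof (induction n)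
    case 0
    then show ?case by simp
  next
    case (Suc n)
    then show ?case by (simp add: sum.cl_ivl_Suc pw algebra_simps)
  qed
  have p0: "\<Phi> 0 = - (qint a * qint b)" unfolding \<Phi>_def d_def using l0 by (simp add: qint_0 algebra_simps)
  have pa: "\<Phi> a = 0"
  proof (cases "lam (Suc a) < lam a")
    case True then show ?thesis unfolding \<Phi>_def d_def by (simp add: algebra_simps)
  next
    case False then have "lam a = 0" using la by simp
    then show ?thesis unfolding \<Phi>_def d_def by (simp add: qint_0)
  qed
  show ?thesis using tele[of a] p0 pa unfolding X_def d_def by simp
qed


lemma downclosed_interval:
  fixes S :: "nat set"
  assumes sub: "S \<subseteq> {1..b}" and dc: "\<And>j j'. j \<in> S \<Longrightarrow> 1 \<le> j' \<Longrightarrow> j' \<le> j \<Longrightarrow> j' \<in> S"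
  shows "S = {1..card S}"
proof (cases "S = {}")
  case True then show ?thesis by simp
next
  case False
  have fin: "finite S" using sub finite_subset by blast
  define m where "m = Max S"
  have mS: "m \<in> S" unfolding m_def using fin False by simp
  have "S = {1..m}"
  proof
    show "S \<subseteq> {1..m}" using sub fin unfolding m_def by auto
    show "{1..m} \<subseteq> S" using dc mS by auto
  qed
  then show ?thesis by simp
qed

lemma grid_prod: "grid a b = {1..a} \<times> {1..b}"
  unfolding grid_def by auto

lemma ideal_facts:
  assumes I: "I \<in> order_ideals (grid a b) grid_le"
  assumes lam_def: "lam = (\<lambda>i. if i = 0 then b else card {j \<in> {1..b}. (i, j) \<in> I})"
  shows mem: "\<And>i j. 1 \<le> i \<Longrightarrow> (i, j) \<in> I \<longleftrightarrow> 1 \<le> j \<and> j \<le> lam i"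
    and lam_le: "\<And>i. lam i \<le> b"
    and lam_big: "\<And>i. a < i \<Longrightarrow> lam i = 0"
    and lam_mono: "\<And>i. lam (Suc i) \<le> lam i"
proof -
  have Isub: "I \<subseteq> grid a b" and Idown: "\<And>x y. x \<in> I \<Longrightarrow> y \<in> grid a b \<Longrightarrow> grid_le y x \<Longrightarrow> y \<in> I"
    using I unfolding order_ideals_def by auto
  have S: "{j \<in> {1..b}. (i, j) \<in> I} = {1..lam i}" if "1 \<le> i" for i
  proof -
    have "{j \<in> {1..b}. (i, j) \<in> I} = {1..card {j \<in> {1..b}. (i, j) \<in> I}}"
    proof (rule downclosed_interval[where b=b])
      fix j j' assume j: "j \<in> {j \<in> {1..b}. (i, j) \<in> I}" and j': "1 \<le> j'" "j' \<le> j"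
      from j have ij: "(i, j) \<in> I" "j \<le> b" by auto
      have "(i, j) \<in> grid a b" using Isub ij(1) by blast
      then have gr: "(i, j') \<in> grid a b" using j' ij(2) unfolding grid_def by simp
      have le: "grid_le (i, j') (i, j)" unfolding grid_le_def using j' by simp
      have "(i, j') \<in> I" by (rule Idown[OF ij(1) gr le])
      then show "j' \<in> {j \<in> {1..b}. (i, j) \<in> I}" using j' ij(2) by simp
    qed auto
    then show ?thesis unfolding lam_def using that by simp
  qed
  show mem: "(i, j) \<in> I \<longleftrightarrow> 1 \<le> j \<and> j \<le> lam i" if "1 \<le> i" for i j
  proof
    assume ij: "(i, j) \<in> I"
    then have "(i, j) \<in> grid a b" using Isub by blast
    then have "j \<in> {j \<in> {1..b}. (i, j) \<in> I}" using ij unfolding grid_def by simp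
    then show "1 \<le> j \<and> j \<le> lam i" unfolding S[OF that] by simp
  next
    assume "1 \<le> j \<and> j \<le> lam i"
    then have "j \<in> {j \<in> {1..b}. (i, j) \<in> I}" unfolding S[OF that] by simp
    then show "(i, j) \<in> I" by simp
  qed
  show lam_le: "lam i \<le> b" for i
  proof (cases "i = 0")
    case False
    have "card {j \<in> {1..b}. (i, j) \<in> I} \<le> card {1..b}" by (rule card_mono) auto
    then show ?thesis unfolding lam_def using False by simp
  qed (simp add: lam_def)
  show "lam i = 0" if "a < i" for i
  proof -
    have "{j \<in> {1..b}. (i, j) \<in> I} = {}" using Isub that unfolding grid_def by auto
    then show ?thesis unfolding lam_def using that by simp
  qed
  show "lam (Suc i) \<le> lam i" for i
  proof (cases "i = 0")
    case True
    have "lam 0 = b" by (simp add: lam_def)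
    then show ?thesis using lam_le[of "Suc 0"] True by simp
  next
    case False
    show ?thesis
    proof (cases "lam (Suc i) = 0")
      case False
      then have "(Suc i, lam (Suc i)) \<in> I" using mem[of "Suc i"] by simp
      then have g: "(Suc i, lam (Suc i)) \<in> grid a b" using Isub by auto
      have "(i, lam (Suc i)) \<in> I"
        apply (rule Idown[OF \<open>(Suc i, lam (Suc i)) \<in> I\<close>])
        using g \<open>i \<noteq> 0\<close> unfolding grid_def grid_le_def by auto
      then show ?thesis using mem[of i] \<open>i \<noteq> 0\<close> by simp
    qed simp
  qed
qed


lemma toggle_minus_char:
  assumes I: "I \<in> order_ideals (grid a b) grid_le"
  assumes lam_def: "lam = (\<lambda>i. if i = 0 then b else card {j \<in> {1..b}. (i, j) \<in> I})"
  assumes p: "(i, j) \<in> grid a b"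
  shows "toggle_minus (grid a b) grid_le (i, j) I = (if j = lam i \<and> lam (Suc i) < j then 1 else 0)"
proof -
  note mem = ideal_facts(1)[OF I lam_def] and lam_le = ideal_facts(2)[OF I lam_def]
  note lam_mono = ideal_facts(4)[OF I lam_def]
  have anti: "lam i' \<le> lam i" if "i \<le> i'" for i i' using lift_Suc_antimono_le[of lam, OF lam_mono that] .
  from p have i: "1 \<le> i" "i \<le> a" and j: "1 \<le> j" "j \<le> b" unfolding grid_def by auto
  have "((i, j) \<in> I \<and> (\<forall>y\<in>I. grid_le (i, j) y \<longrightarrow> y = (i, j))) \<longleftrightarrow> (j = lam i \<and> lam (Suc i) < j)"
  proof
    assume H: "(i, j) \<in> I \<and> (\<forall>y\<in>I. grid_le (i, j) y \<longrightarrow> y = (i, j))"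
    then have jl: "j \<le> lam i" using mem[OF i(1)] by simp
    have "j = lam i"
    proof (rule ccontr)
      assume "j \<noteq> lam i"
      then have "(i, Suc j) \<in> I" using mem[OF i(1), of "Suc j"] jl by simp
      moreover have "grid_le (i, j) (i, Suc j)" unfolding grid_le_def by simp
      ultimately show False using H by auto
    qed
    moreover have "lam (Suc i) < j"
    proof (rule ccontr)
      assume "\<not> lam (Suc i) < j"
      then have "(Suc i, j) \<in> I" using mem[of "Suc i" j] j by simp
      moreover have "grid_le (i, j) (Suc i, j)" unfolding grid_le_def by simp
      ultimately show False using H by auto
    qed
    ultimately show "j = lam i \<and> lam (Suc i) < j" by simp
  next
    assume H: "j = lam i \<and> lam (Suc i) < j"
    have "(i, j) \<in> I" using mem[OF i(1)] H j by simp
    moreover have "y = (i, j)" if y: "y \<in> I" "grid_le (i, j) y" for y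
    proof -
      obtain i' j' where yy: "y = (i', j')" by (cases y)
      have le: "i \<le> i'" "j \<le> j'" using y(2) unfolding yy grid_le_def by auto
      have "1 \<le> i'" using le i by simp
      then have j'l: "j' \<le> lam i'" using mem[of i' j'] y(1) yy by simp
      have "lam i' \<le> lam i" using anti le(1) .
      then have "j' = j" using j'l le H by simp
      moreover have "i' = i"
      proof (rule ccontr)
        assume "i' \<noteq> i"
        then have "Suc i \<le> i'" using le by simp
        then have "lam i' \<le> lam (Suc i)" using anti by blast
        then show False using j'l le H by simp
      qed
      ultimately show ?thesis using yy by simp
    qed
    ultimately show "(i, j) \<in> I \<and> (\<forall>y\<in>I. grid_le (i, j) y \<longrightarrow> y = (i, j))" by blast
  qed
  then show ?thesis unfolding toggle_minus_def by simp
qed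

lemma toggle_plus_char:
  assumes I: "I \<in> order_ideals (grid a b) grid_le"
  assumes lam_def: "lam = (\<lambda>i. if i = 0 then b else card {j \<in> {1..b}. (i, j) \<in> I})"
  assumes p: "(i, j) \<in> grid a b"
  shows "toggle_plus (grid a b) grid_le (i, j) I = (if j = Suc (lam i) \<and> j \<le> lam (i - 1) then 1 else 0)"
proof -
  note mem = ideal_facts(1)[OF I lam_def] and lam_le = ideal_facts(2)[OF I lam_def]
  note lam_mono = ideal_facts(4)[OF I lam_def]
  have anti: "lam i' \<le> lam i" if "i \<le> i'" for i i' using lift_Suc_antimono_le[of lam, OF lam_mono that] .
  have l0: "lam 0 = b" using lam_def by simp
  from p have i: "1 \<le> i" "i \<le> a" and j: "1 \<le> j" "j \<le> b" unfolding grid_def by auto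
  have "((i, j) \<in> grid a b - I \<and> (\<forall>y\<in>grid a b - I. grid_le y (i, j) \<longrightarrow> y = (i, j))) \<longleftrightarrow> (j = Suc (lam i) \<and> j \<le> lam (i - 1))"
  proof
    assume H: "(i, j) \<in> grid a b - I \<and> (\<forall>y\<in>grid a b - I. grid_le y (i, j) \<longrightarrow> y = (i, j))"
    then have jl: "lam i < j" using mem[OF i(1)] j by auto
    have "j = Suc (lam i)"
    proof (rule ccontr)
      assume "j \<noteq> Suc (lam i)"
      then have "(i, j - 1) \<notin> I" using mem[OF i(1), of "j - 1"] jl \<open>j \<noteq> Suc (lam i)\<close> by (simp; linarith)
      moreover have "(i, j - 1) \<in> grid a b" using i j jl \<open>j \<noteq> Suc (lam i)\<close> unfolding grid_def by (simp; linarith)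
      moreover have "grid_le (i, j - 1) (i, j)" unfolding grid_le_def by simp
      ultimately show False using H jl \<open>j \<noteq> Suc (lam i)\<close> by auto
    qed
    moreover have "j \<le> lam (i - 1)"
    proof (rule ccontr)
      assume A: "\<not> j \<le> lam (i - 1)"
      then have "i \<noteq> 1" using l0 j by auto
      then have i1: "1 \<le> i - 1" using i by simp
      then have "(i - 1, j) \<notin> I" using mem[OF i1, of j] A by simp
      moreover have "(i - 1, j) \<in> grid a b" using i j i1 unfolding grid_def by simp
      moreover have "grid_le (i - 1, j) (i, j)" unfolding grid_le_def by simp
      ultimately show False using H i1 i by auto
    qed
    ultimately show "j = Suc (lam i) \<and> j \<le> lam (i - 1)" by simp
  next
    assume H: "j = Suc (lam i) \<and> j \<le> lam (i - 1)"
    have "(i, j) \<notin> I" using mem[OF i(1)] H by simp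
    moreover have "y = (i, j)" if y: "y \<in> grid a b - I" "grid_le y (i, j)" for y
    proof -
      obtain i' j' where yy: "y = (i', j')" by (cases y)
      have le: "i' \<le> i" "j' \<le> j" using y(2) unfolding yy grid_le_def by auto
      have g: "1 \<le> i'" "1 \<le> j'" using y(1) unfolding yy grid_def by auto
      then have j'l: "lam i' < j'" using mem[of i' j'] y(1) yy by auto
      have "i' = i"
      proof (rule ccontr)
        assume "i' \<noteq> i"
        then have "i' \<le> i - 1" using le by simp
        then have "lam (i - 1) \<le> lam i'" using anti by blast
        then show False using j'l le H by simp
      qed
      moreover have "j' = j" using j'l le H \<open>i' = i\<close> by simp
      ultimately show ?thesis using yy by simp
    qed
    ultimately show "(i, j) \<in> grid a b - I \<and> (\<forall>y\<in>grid a b - I. grid_le y (i, j) \<longrightarrow> y = (i, j))"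
      using p by blast
  qed
  then show ?thesis unfolding toggle_plus_def by simp
qed


lemma sum_if_eq:
  fixes f :: "nat \<Rightarrow> ratfun"
  assumes "finite S"
  shows "(\<Sum>j\<in>S. if j = k \<and> P then f j else 0) = (if P \<and> k \<in> S then f k else 0)"
  using assms by (cases P) (simp_all add: sum.delta')

theorem theorem5p11:
  fixes a b :: nat
  assumes "1 \<le> a" and "1 \<le> b"
  shows "qequiv (grid a b) grid_le
           (\<lambda>I. \<Sum>p\<in>grid a b. toggle_minus (grid a b) grid_le p I)
           (\<lambda>I. qint a * qint b / qint (a + b))"
proof -
  have Dnz: "qint (a+b) \<noteq> 0" using qint_pos[of "a+b"] assms by simp
  define E where "E = (\<lambda>i j. qint (i - 1) * qint b + qint (j - 1) * qint a - qint a * qint b)"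
  define c where "c = (\<lambda>p::nat\<times>nat. E (fst p) (snd p) / qint (a+b))"
  show ?thesis unfolding qequiv_def
  proof (intro exI ballI)
    fix I assume I: "I \<in> order_ideals (grid a b) grid_le"
    define lam where "lam = (\<lambda>i. if i = 0 then b else card {j \<in> {1..b}. (i, j) \<in> I})"
    note lam_le = ideal_facts(2)[OF I lam_def] and lam_big = ideal_facts(3)[OF I lam_def]
    note lam_mono = ideal_facts(4)[OF I lam_def]
    have l0: "lam 0 = b" unfolding lam_def by simp
    have la: "lam (Suc a) = 0" using lam_big by simp
    define d where "d = (\<lambda>i. if lam (Suc i) < lam i then 1 else 0 :: ratfun)"
    define Y where "Y = (\<lambda>i. (if lam i < lam (i-1) then E i (Suc (lam i)) else 0)
           - qvar * (if lam (Suc i) < lam i then E i (lam i) else 0))"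
    have sg: "\<And>h. (\<Sum>p\<in>grid a b. h p) = (\<Sum>i\<in>{1..a}. \<Sum>j\<in>{1..b}. h (i, j))"
      unfolding grid_prod by (simp add: sum.cartesian_product)
    have rm: "(\<Sum>j\<in>{1..b}. f j * toggle_minus (grid a b) grid_le (i, j) I) = (if lam (Suc i) < lam i then f (lam i) else 0)"
      if i: "i \<in> {1..a}" for i and f :: "nat \<Rightarrow> ratfun"
    proof -
      have "(\<Sum>j\<in>{1..b}. f j * toggle_minus (grid a b) grid_le (i, j) I)
          = (\<Sum>j\<in>{1..b}. if j = lam i \<and> lam (Suc i) < lam i then f j else 0)"
      proof (rule sum.cong[OF refl])
        fix j assume "j \<in> {1..b}"
        then have g: "(i, j) \<in> grid a b" using i unfolding grid_def by simp
        show "f j * toggle_minus (grid a b) grid_le (i, j) I = (if j = lam i \<and> lam (Suc i) < lam i then f j else 0)"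
          by (auto simp: toggle_minus_char[OF I lam_def g])
      qed
      also have "\<dots> = (if lam (Suc i) < lam i \<and> lam i \<in> {1..b} then f (lam i) else 0)"
        by (rule sum_if_eq) simp
      also have "\<dots> = (if lam (Suc i) < lam i then f (lam i) else 0)" using lam_le[of i] by auto
      finally show ?thesis .
    qed
    have rp: "(\<Sum>j\<in>{1..b}. f j * toggle_plus (grid a b) grid_le (i, j) I) = (if lam i < lam (i - 1) then f (Suc (lam i)) else 0)"
      if i: "i \<in> {1..a}" for i and f :: "nat \<Rightarrow> ratfun"
    proof -
      have "(\<Sum>j\<in>{1..b}. f j * toggle_plus (grid a b) grid_le (i, j) I)
          = (\<Sum>j\<in>{1..b}. if j = Suc (lam i) \<and> lam i < lam (i - 1) then f j else 0)"
      proof (rule sum.cong[OF refl])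
        fix j assume "j \<in> {1..b}"
        then have g: "(i, j) \<in> grid a b" using i unfolding grid_def by simp
        show "f j * toggle_plus (grid a b) grid_le (i, j) I = (if j = Suc (lam i) \<and> lam i < lam (i - 1) then f j else 0)"
          by (auto simp: toggle_plus_char[OF I lam_def g])
      qed
      also have "\<dots> = (if lam i < lam (i - 1) \<and> Suc (lam i) \<in> {1..b} then f (Suc (lam i)) else 0)"
        by (rule sum_if_eq) simp
      also have "\<dots> = (if lam i < lam (i - 1) then f (Suc (lam i)) else 0)" using lam_le[of "i - 1"] by auto
      finally show ?thesis .
    qed
    have lhs: "(\<Sum>p\<in>grid a b. toggle_minus (grid a b) grid_le p I) = (\<Sum>i\<in>{1..a}. d i)"
      unfolding sg using rm[of _ "\<lambda>_. 1"] unfolding d_def by (intro sum.cong) auto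
    have rhs: "(\<Sum>p\<in>grid a b. c p * toggle_q (grid a b) grid_le p I) = (\<Sum>i\<in>{1..a}. Y i) / qint (a+b)"
    proof -
      have "(\<Sum>p\<in>grid a b. c p * toggle_q (grid a b) grid_le p I)
         = (\<Sum>i\<in>{1..a}. (\<Sum>j\<in>{1..b}. (\<lambda>j. E i j / qint (a+b)) j * toggle_plus (grid a b) grid_le (i, j) I)
              - qvar * (\<Sum>j\<in>{1..b}. (\<lambda>j. E i j / qint (a+b)) j * toggle_minus (grid a b) grid_le (i, j) I))"
        unfolding sg c_def toggle_q_def
        by (simp add: algebra_simps sum_subtractf sum_distrib_left)
      also have "\<dots> = (\<Sum>i\<in>{1..a}. Y i / qint (a+b))"
      proof (rule sum.cong[OF refl])
        fix i assume i: "i \<in> {1..a}"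
        have m: "(\<Sum>j\<in>{1..b}. E i j / qint (a+b) * toggle_minus (grid a b) grid_le (i, j) I)
           = (if lam (Suc i) < lam i then E i (lam i) / qint (a+b) else 0)" by (rule rm[OF i])
        have p: "(\<Sum>j\<in>{1..b}. E i j / qint (a+b) * toggle_plus (grid a b) grid_le (i, j) I)
           = (if lam i < lam (i - 1) then E i (Suc (lam i)) / qint (a+b) else 0)" by (rule rp[OF i])
        show "(\<Sum>j\<in>{1..b}. (\<lambda>j. E i j / qint (a+b)) j * toggle_plus (grid a b) grid_le (i, j) I)
              - qvar * (\<Sum>j\<in>{1..b}. (\<lambda>j. E i j / qint (a+b)) j * toggle_minus (grid a b) grid_le (i, j) I)
              = Y i / qint (a+b)"
          unfolding m p Y_def by (simp add: diff_divide_distrib)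
      qed
      finally show ?thesis by (simp add: sum_divide_distrib)
    qed
    have key: "(\<Sum>i\<in>{1..a}. Y i) = qint (a+b) * (\<Sum>i\<in>{1..a}. d i) - qint a * qint b"
      using lam_identity[where lam=lam and a=a and b=b, OF lam_mono l0 la]
      unfolding Y_def d_def E_def by simp
    show "(\<Sum>p\<in>grid a b. toggle_minus (grid a b) grid_le p I) - qint a * qint b / qint (a + b)
          = (\<Sum>p\<in>grid a b. c p * toggle_q (grid a b) grid_le p I)"
      unfolding lhs rhs key using Dnz by (simp add: field_simps)
  qed
qed

end
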